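(* Let $A$ be a finite nonempty alphabet and $\zeta:A^\omega\to A^\omega$ a bijective $\omega$-sequential function. Then $\zeta^{-1}$ is a bijective $\omega$-sequential function.
   Context: For an infinite word $z$, $z[0,n]$ is its prefix of length $n$. A map $\zeta:A^\omega\to A^\omega$ is $\omega$-sequential if whenever a finite word $u$ is a common prefix of $x$ and $y$, then $\zeta(x)[0,|u|]=\zeta(y)[0,|u|]$. *)

theory Defs
  imports "HOL-Library.Omega_Words_Fun"
begin

definition omega_sequential :: "('a word \<Rightarrow> 'a word) \<Rightarrow> bool" where
  "omega_sequential \<zeta> \<longleftrightarrow>
     (\<forall>x y (u :: 'a list). prefix (length u) x = u \<and> prefix (length u) y = u \<longrightarrow>
        prefix (length u) (\<zeta> x) = prefix (length u) (\<zeta> y))"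

end

theory Submission
  imports Defs
begin

lemma key:
  fixes \<zeta> :: "('a::finite) word \<Rightarrow> 'a word"
  assumes "surj \<zeta>" and os: "omega_sequential \<zeta>"
    and eq: "prefix n (\<zeta> x) = prefix n (\<zeta> y)"
  shows "prefix n x = prefix n y"
proof -
  define S where "S = {xs :: 'a list. set xs \<subseteq> UNIV \<and> length xs = n}"
  have fin: "finite S" unfolding S_def by (rule finite_lists_length_eq) simp
  define g where "g u = prefix n (\<zeta> (u \<frown> x))" for u :: "'a list"
  have gp: "g (prefix n z) = prefix n (\<zeta> z)" for z
  proof -
    have "prefix n (\<zeta> (prefix n z \<frown> x)) = prefix n (\<zeta> z)"
    proof -
      have l: "length (prefix n z) = n" by simp
      show ?thesis using os[unfolded omega_sequential_def, rule_format, of "prefix n z \<frown> x" "prefix n z" z]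
        l by simp
    qed
    thus ?thesis by (simp add: g_def)
  qed
  have "g ` S = S"
  proof
    show "g ` S \<subseteq> S" by (auto simp: S_def g_def)
    show "S \<subseteq> g ` S"
    proof
      fix v assume "v \<in> S"
      hence lv: "length v = n" by (simp add: S_def)
      obtain z where z: "\<zeta> z = v \<frown> x" using assms(1) by (metis surjD)
      have "g (prefix n z) = v" using gp[of z] z lv by (metis prefix_conc_length)
      moreover have "prefix n z \<in> S" by (simp add: S_def)
      ultimately show "v \<in> g ` S" by blast
    qed
  qed
  hence inj: "inj_on g S" using fin by (simp add: eq_card_imp_inj_on)
  have "g (prefix n x) = g (prefix n y)" using gp eq by simp
  moreover have "prefix n x \<in> S" "prefix n y \<in> S" by (simp_all add: S_def)
  ultimately show ?thesis using inj by (meson inj_onD)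
qed

theorem lemma4p7:
  fixes \<zeta> :: "('a::finite) word \<Rightarrow> 'a word"
  assumes "bij \<zeta>" and "omega_sequential \<zeta>"
  shows "bij (inv \<zeta>) \<and> omega_sequential (inv \<zeta>)"
proof
  show "bij (inv \<zeta>)" using assms(1) by (rule bij_imp_bij_inv)
  show "omega_sequential (inv \<zeta>)"
    unfolding omega_sequential_def
  proof (intro allI impI)
    fix x y and u :: "'a list"
    assume h: "prefix (length u) x = u \<and> prefix (length u) y = u"
    have s: "surj \<zeta>" using assms(1) by (simp add: bij_is_surj)
    have "\<zeta> (inv \<zeta> x) = x" "\<zeta> (inv \<zeta> y) = y" using s by (simp_all add: surj_f_inv_f)
    thus "prefix (length u) (inv \<zeta> x) = prefix (length u) (inv \<zeta> y)"
      using key[OF s assms(2)] h by metis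
  qed
qed

end
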